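(* Assume the operators $L_r:Lip_d(I)\to Lip_d(I)$, $r\in\mathbb{N}$, are uniformly bounded. Then the non-stationary fractal operator $\mathfrak{F}^\alpha_b:Lip_d(I)\to C(I)$, $\mathfrak{F}^\alpha_b(f)=f^\alpha_b$, is topologically bounded, i.e. it maps bounded sets to bounded sets.
   Context: Setting: $I=[x_0,x_N]$ with partition $\Delta: x_0<x_1<\dots<x_N$, $I_i=[x_{i-1},x_i]$, $l_i:I\to I_i$ the increasing affine bijection $l_i(x)=\frac{x_i-x_{i-1}}{x_N-x_0}x+\frac{x_Nx_{i-1}-x_0x_i}{x_N-x_0}$, and $Q_i=l_i^{-1}$. Scaling functions $\alpha_{i,r}:I\to\mathbb{R}$ ($i=1,\dots,N$, $r\in\mathbb{N}$) are continuous with $\|\alpha\|_\infty:=\sup_{r}\max_i\|\alpha_{i,r}\|_\infty<1$. $Lip_d(I)$ ($0<d\le1$) is the space of real functions $g$ on $I$ with $\sup_{x\ne y}|g(x)-g(y)|/|x-y|^d<\infty$, regarded as a subset of $C(I)$ with the supremum norm. $L_r:Lip_d(I)\to Lip_d(I)$ are operators (not necessarily linear) with $(L_rg)(x_0)=g(x_0)$, $(L_rg)(x_N)=g(x_N)$ for all $g$, and $\sup_r\|L_r\|_\infty<\infty$, where $\|L_r\|_\infty=\sup_{g\ne0}\|L_rg\|_\infty/\|g\|_\infty$. "Uniformly bounded" means: for every bounded $S\subset Lip_d(I)$, $\sup_r\sup_{g\in S}\|L_rg\|_\infty<\infty$. Non-stationary $\alpha$-fractal function: for $f\in C(I)$ and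 base functions $b_r\in C(I)$ with $b_r(x_0)=f(x_0)$, $b_r(x_N)=f(x_N)$, $\sup_r\|b_r\|_\infty<\infty$, let $C_f(I)=\{g\in C(I):g(x_0)=f(x_0),g(x_N)=f(x_N)\}$ and $T^{\alpha_r}:C_f(I)\to C_f(I)$, $(T^{\alpha_r}g)(x)=f(x)+\alpha_{i,r}(Q_i(x))(g-b_r)(Q_i(x))$ for $x\in I_i$. For every $g\in C_f(I)$, $T^{\alpha_1}\circ\cdots\circ T^{\alpha_r}g$ converges uniformly to a function independent of $g$; this is the non-stationary $\alpha$-fractal function. $f^\alpha_b$ denotes it for $f\in Lip_d(I)$ with $b_r=L_rf$. *)

theory Defs
  imports "HOL-Analysis.Analysis"
begin

text \<open>Partition xs 0 < xs 1 < ... < xs N of I = [xs 0, xs N].\<close>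

definition lip_space :: "real \<Rightarrow> real set \<Rightarrow> (real \<Rightarrow> real) set" where
  "lip_space d I = {g. \<exists>K. \<forall>x\<in>I. \<forall>y\<in>I. \<bar>g x - g y\<bar> \<le> K * \<bar>x - y\<bar> powr d}"

text \<open>The affine map l_i : I -> I_i and its inverse Q_i.\<close>
definition lmap :: "(nat \<Rightarrow> real) \<Rightarrow> nat \<Rightarrow> nat \<Rightarrow> real \<Rightarrow> real" where
  "lmap xs N i x = (xs i - xs (i - 1)) / (xs N - xs 0) * x
                   + (xs N * xs (i - 1) - xs 0 * xs i) / (xs N - xs 0)"

definition Qmap :: "(nat \<Rightarrow> real) \<Rightarrow> nat \<Rightarrow> nat \<Rightarrow> real \<Rightarrow> real" where
  "Qmap xs N i x = xs 0 + (xs N - xs 0) * (x - xs (i - 1)) / (xs i - xs (i - 1))"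

definition sub_index :: "(nat \<Rightarrow> real) \<Rightarrow> nat \<Rightarrow> real \<Rightarrow> nat" where
  "sub_index xs N x = (LEAST i. 1 \<le> i \<and> i \<le> N \<and> x \<le> xs i)"

text \<open>The RB operator T^{alpha_r} with germ f, base function b and scalings alpha_{i,r} = a i.\<close>
definition fractal_T :: "(nat \<Rightarrow> real) \<Rightarrow> nat \<Rightarrow> (real \<Rightarrow> real) \<Rightarrow> (real \<Rightarrow> real)
     \<Rightarrow> (nat \<Rightarrow> real \<Rightarrow> real) \<Rightarrow> (real \<Rightarrow> real) \<Rightarrow> real \<Rightarrow> real" where
  "fractal_T xs N f b a g x =
     (if x \<in> {xs 0..xs N} then
        (let i = sub_index xs N x; q = Qmap xs N i x in f x + a i q * (g q - b q))
      else f x)"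

text \<open>nsiter T r g = (T 1 o T 2 o ... o T r) g.\<close>
fun nsiter :: "(nat \<Rightarrow> ('a \<Rightarrow> 'a)) \<Rightarrow> nat \<Rightarrow> 'a \<Rightarrow> 'a" where
  "nsiter T 0 g = g"
| "nsiter T (Suc r) g = nsiter T r (T (Suc r) g)"

text \<open>Non-stationary alpha-fractal function f^alpha_b with b_r = L_r f, obtained as the
  limit of the iterates started at g = f (the limit is independent of the start).
  alpha i r is alpha_{i,r}.\<close>
definition ns_fractal :: "(nat \<Rightarrow> real) \<Rightarrow> nat \<Rightarrow> (nat \<Rightarrow> nat \<Rightarrow> real \<Rightarrow> real)
     \<Rightarrow> (nat \<Rightarrow> (real \<Rightarrow> real) \<Rightarrow> (real \<Rightarrow> real)) \<Rightarrow> (real \<Rightarrow> real) \<Rightarrow> real \<Rightarrow> real" where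
  "ns_fractal xs N alpha L f =
     (\<lambda>x. lim (\<lambda>r. nsiter (\<lambda>r. fractal_T xs N f (L r f) (\<lambda>i. alpha i r)) r f x))"

end

theory Submission imports Defs begin

lemma xs_mono:
  assumes part: "\<And>i. i < N \<Longrightarrow> xs i < (xs (Suc i)::real)"
  shows "i < j \<Longrightarrow> j \<le> N \<Longrightarrow> xs i < xs j"
proof (induction j)
  case 0 then show ?case by simp
next
  case (Suc j)
  then show ?case using part[of j]
    by (metis Suc_le_lessD less_Suc_eq order.strict_trans order_less_imp_le)
qed

lemma sub_index_props:
  assumes N: "1 \<le> N" and part: "\<And>i. i < N \<Longrightarrow> xs i < (xs (Suc i)::real)"
    and x: "x \<in> {xs 0..xs N}"
  shows "1 \<le> sub_index xs N x \<and> sub_index xs N x \<le> N \<and>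
         Qmap xs N (sub_index xs N x) x \<in> {xs 0..xs N}"
proof -
  let ?P = "\<lambda>i. 1 \<le> i \<and> i \<le> N \<and> x \<le> xs i"
  define i where "i = sub_index xs N x"
  have ex: "?P N" using N x by auto
  have Pi: "?P i" unfolding i_def sub_index_def by (rule LeastI[of ?P N, OF ex])
  have lo: "xs (i - 1) \<le> x"
  proof (cases "i = 1")
    case True then show ?thesis using x by simp
  next
    case False
    then have "\<not> ?P (i - 1)" unfolding i_def sub_index_def
      using Pi i_def not_less_Least[of "i - 1" ?P] by (simp add: sub_index_def)
    then show ?thesis using Pi False by auto
  qed
  have lt: "xs (i - 1) < xs i" using xs_mono[of N xs, OF part, of "i - 1" i] Pi by auto
  have x0N: "xs 0 < xs N" using xs_mono[of N xs, OF part, of 0 N] N by auto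
  have q: "Qmap xs N i x = xs 0 + (xs N - xs 0) * ((x - xs (i - 1)) / (xs i - xs (i - 1)))"
    unfolding Qmap_def by simp
  have t0: "0 \<le> (x - xs (i - 1)) / (xs i - xs (i - 1))" using lo lt by simp
  have t1: "(x - xs (i - 1)) / (xs i - xs (i - 1)) \<le> 1" using lo lt Pi by simp
  have "(xs N - xs 0) * ((x - xs (i - 1)) / (xs i - xs (i - 1))) \<le> (xs N - xs 0) * 1"
    by (rule mult_left_mono[OF t1]) (use x0N in simp)
  moreover have "0 \<le> (xs N - xs 0) * ((x - xs (i - 1)) / (xs i - xs (i - 1)))"
    using t0 x0N by (intro mult_nonneg_nonneg) auto
  ultimately have "Qmap xs N i x \<in> {xs 0..xs N}" unfolding q by auto
  then show ?thesis using Pi i_def by auto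
qed

lemma T_contr:
  assumes N: "1 \<le> N" and part: "\<And>i. i < N \<Longrightarrow> xs i < (xs (Suc i)::real)"
    and a: "\<forall>i\<in>{1..N}. \<forall>y\<in>{xs 0..xs N}. \<bar>a i y\<bar> \<le> s"
    and gh: "\<forall>y\<in>{xs 0..xs N}. \<bar>g y - h y\<bar> \<le> D"
    and x: "x \<in> {xs 0..xs N}"
  shows "\<bar>fractal_T xs N f b a g x - fractal_T xs N f b a h x\<bar> \<le> s * D"
proof -
  define i where "i = sub_index xs N x"
  define q where "q = Qmap xs N i x"
  have P: "1 \<le> i" "i \<le> N" "q \<in> {xs 0..xs N}"
    using sub_index_props[OF N part x] unfolding i_def q_def by auto
  have "fractal_T xs N f b a g x - fractal_T xs N f b a h x = a i q * (g q - h q)"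
    using x unfolding fractal_T_def Let_def i_def[symmetric] q_def[symmetric]
    by (simp add: algebra_simps)
  also have "\<bar>\<dots>\<bar> = \<bar>a i q\<bar> * \<bar>g q - h q\<bar>" by (simp add: abs_mult)
  also have "\<dots> \<le> s * D"
  proof -
    have "\<bar>a i q\<bar> \<le> s" using a P by auto
    moreover have "\<bar>g q - h q\<bar> \<le> D" using gh P by auto
    ultimately show ?thesis by (intro mult_mono) auto
  qed
  finally show ?thesis .
qed

lemma T_step:
  assumes N: "1 \<le> N" and part: "\<And>i. i < N \<Longrightarrow> xs i < (xs (Suc i)::real)"
    and a: "\<forall>i\<in>{1..N}. \<forall>y\<in>{xs 0..xs N}. \<bar>a i y\<bar> \<le> s"
    and s: "s \<le> 1"
    and fb: "\<forall>y\<in>{xs 0..xs N}. \<bar>f y\<bar> + \<bar>b y\<bar> \<le> K"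
    and x: "x \<in> {xs 0..xs N}"
  shows "\<bar>fractal_T xs N f b a f x - f x\<bar> \<le> K"
proof -
  define i where "i = sub_index xs N x"
  define q where "q = Qmap xs N i x"
  have P: "1 \<le> i" "i \<le> N" "q \<in> {xs 0..xs N}"
    using sub_index_props[OF N part x] unfolding i_def q_def by auto
  have "fractal_T xs N f b a f x - f x = a i q * (f q - b q)"
    using x unfolding fractal_T_def Let_def i_def[symmetric] q_def[symmetric]
    by (simp add: algebra_simps)
  also have "\<bar>\<dots>\<bar> = \<bar>a i q\<bar> * \<bar>f q - b q\<bar>" by (simp add: abs_mult)
  also have "\<dots> \<le> 1 * K"
  proof -
    have "\<bar>a i q\<bar> \<le> 1" using a P s by force
    moreover have "\<bar>f q - b q\<bar> \<le> K" using fb P by force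
    ultimately show ?thesis by (intro mult_mono) auto
  qed
  finally show ?thesis by simp
qed

lemma nsiter_contr:
  assumes contr: "\<And>k g h D x. 1 \<le> k \<Longrightarrow> \<forall>y\<in>I. \<bar>g y - h y\<bar> \<le> D \<Longrightarrow> x \<in> I \<Longrightarrow>
      \<bar>T k g x - T k h x\<bar> \<le> s * (D::real)"
  shows "\<forall>y\<in>I. \<bar>g y - h y\<bar> \<le> D \<Longrightarrow> x \<in> I \<Longrightarrow>
      \<bar>nsiter T r g x - nsiter T r h x\<bar> \<le> s ^ r * D"
proof (induction r arbitrary: g h D x)
  case 0 then show ?case by simp
next
  case (Suc r)
  have "\<forall>y\<in>I. \<bar>T (Suc r) g y - T (Suc r) h y\<bar> \<le> s * D"
    using contr Suc.prems by auto
  from Suc.IH[OF this Suc.prems(2)] show ?case by (simp add: mult.assoc mult.commute mult.left_commute)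
qed

theorem mainTheorem5:
  fixes xs :: "nat \<Rightarrow> real" and N :: nat and d :: real
    and alpha :: "nat \<Rightarrow> nat \<Rightarrow> real \<Rightarrow> real"
    and L :: "nat \<Rightarrow> (real \<Rightarrow> real) \<Rightarrow> (real \<Rightarrow> real)"
  assumes N: "1 \<le> N"
    and part: "\<And>i. i < N \<Longrightarrow> xs i < xs (Suc i)"
    and d: "0 < d" "d \<le> 1"
    and alpha_cont: "\<And>i r. 1 \<le> i \<Longrightarrow> i \<le> N \<Longrightarrow> 1 \<le> r \<Longrightarrow>
                        continuous_on {xs 0..xs N} (alpha i r)"
    and alpha_norm: "\<exists>s<1. \<forall>r\<ge>1. \<forall>i\<in>{1..N}. \<forall>x\<in>{xs 0..xs N}. \<bar>alpha i r x\<bar> \<le> s"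
    and L_maps: "\<And>r g. 1 \<le> r \<Longrightarrow> g \<in> lip_space d {xs 0..xs N} \<Longrightarrow>
                    L r g \<in> lip_space d {xs 0..xs N}"
    and L_left: "\<And>r g. 1 \<le> r \<Longrightarrow> g \<in> lip_space d {xs 0..xs N} \<Longrightarrow> L r g (xs 0) = g (xs 0)"
    and L_right: "\<And>r g. 1 \<le> r \<Longrightarrow> g \<in> lip_space d {xs 0..xs N} \<Longrightarrow> L r g (xs N) = g (xs N)"
    and L_norm: "\<exists>M. \<forall>r\<ge>1. \<forall>g\<in>lip_space d {xs 0..xs N}.
                   (\<exists>x\<in>{xs 0..xs N}. g x \<noteq> 0) \<longrightarrow>
                   (\<forall>x\<in>{xs 0..xs N}. \<bar>L r g x\<bar> \<le> M * (SUP y\<in>{xs 0..xs N}. \<bar>g y\<bar>))"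
    and L_unif: "\<And>S. S \<subseteq> lip_space d {xs 0..xs N} \<Longrightarrow>
                   (\<exists>B. \<forall>g\<in>S. \<forall>x\<in>{xs 0..xs N}. \<bar>g x\<bar> \<le> B) \<Longrightarrow>
                   (\<exists>C. \<forall>r\<ge>1. \<forall>g\<in>S. \<forall>x\<in>{xs 0..xs N}. \<bar>L r g x\<bar> \<le> C)"
  shows "\<forall>S. S \<subseteq> lip_space d {xs 0..xs N} \<longrightarrow>
           (\<exists>B. \<forall>g\<in>S. \<forall>x\<in>{xs 0..xs N}. \<bar>g x\<bar> \<le> B) \<longrightarrow>
           (\<exists>C. \<forall>f\<in>S. \<forall>x\<in>{xs 0..xs N}. \<bar>ns_fractal xs N alpha L f x\<bar> \<le> C)"
proof (intro allI impI)
  fix S assume Ssub: "S \<subseteq> lip_space d {xs 0..xs N}"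
    and SB: "\<exists>B. \<forall>g\<in>S. \<forall>x\<in>{xs 0..xs N}. \<bar>g x\<bar> \<le> B"
  obtain B where B: "\<forall>g\<in>S. \<forall>x\<in>{xs 0..xs N}. \<bar>g x\<bar> \<le> B" using SB by blast
  obtain C where C: "\<forall>r\<ge>1. \<forall>g\<in>S. \<forall>x\<in>{xs 0..xs N}. \<bar>L r g x\<bar> \<le> C"
    using L_unif[OF Ssub SB] by blast
  obtain s where s1: "s < 1" and sa: "\<forall>r\<ge>1. \<forall>i\<in>{1..N}. \<forall>x\<in>{xs 0..xs N}. \<bar>alpha i r x\<bar> \<le> s"
    using alpha_norm by blast
  have x0N: "xs 0 < xs N" using xs_mono[of N xs, OF part, of 0 N] N by auto
  have s0: "0 \<le> s" using sa[rule_format, of 1 1 "xs 0"] N x0N by force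
  define K where "K = B + C"
  show "\<exists>C. \<forall>f\<in>S. \<forall>x\<in>{xs 0..xs N}. \<bar>ns_fractal xs N alpha L f x\<bar> \<le> C"
  proof (intro exI ballI)
    fix f x assume fS: "f \<in> S" and x: "x \<in> {xs 0..xs N}"
    define T where "T = (\<lambda>r. fractal_T xs N f (L r f) (\<lambda>i. alpha i r))"
    define g where "g = (\<lambda>r. nsiter T r f x)"
    have nf: "ns_fractal xs N alpha L f x = lim g"
      unfolding ns_fractal_def g_def T_def by simp
    have contr: "\<bar>T k g1 y - T k h y\<bar> \<le> s * D"
      if "1 \<le> k" "\<forall>y\<in>{xs 0..xs N}. \<bar>g1 y - h y\<bar> \<le> D" "y \<in> {xs 0..xs N}" for k g1 h D y
      unfolding T_def
      by (rule T_contr[OF N part _ that(2) that(3)]) (use sa that(1) in auto)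
    have step: "\<forall>y\<in>{xs 0..xs N}. \<bar>T (Suc k) f y - f y\<bar> \<le> K" for k
    proof
      fix y assume y: "y \<in> {xs 0..xs N}"
      show "\<bar>T (Suc k) f y - f y\<bar> \<le> K"
        unfolding T_def
      proof (rule T_step[OF N part _ _ _ y])
        show "\<forall>i\<in>{1..N}. \<forall>y\<in>{xs 0..xs N}. \<bar>alpha i (Suc k) y\<bar> \<le> s" using sa by auto
        show "s \<le> 1" using s1 by simp
        show "\<forall>y\<in>{xs 0..xs N}. \<bar>f y\<bar> + \<bar>L (Suc k) f y\<bar> \<le> K"
          unfolding K_def using B C fS by (auto intro: add_mono)
      qed
    qed
    define dd where "dd = (\<lambda>k. g (Suc k) - g k)"
    have ddb: "\<bar>dd k\<bar> \<le> s ^ k * K" for k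
    proof -
      have "\<bar>nsiter T k (T (Suc k) f) x - nsiter T k f x\<bar> \<le> s ^ k * K"
        by (rule nsiter_contr[where I="{xs 0..xs N}"]) (use contr step x in auto)
      then show ?thesis unfolding dd_def g_def by simp
    qed
    have sg: "summable (\<lambda>k. s ^ k * K)"
      using s0 s1 by (intro summable_mult2 summable_geometric) auto
    have sd: "summable (\<lambda>k. \<bar>dd k\<bar>)"
      by (rule summable_comparison_test[OF _ sg]) (use ddb in auto)
    have sd': "summable dd" using sd summable_rabs_cancel by blast
    have tel: "(\<Sum>k<n. dd k) = g n - f x" for n
    proof -
      have "(\<Sum>k<n. dd k) = g n - g 0" unfolding dd_def by (rule sum_lessThan_telescope)
      moreover have "g 0 = f x" by (simp add: g_def)
      ultimately show ?thesis by simp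
    qed
    have "(\<lambda>n. \<Sum>k<n. dd k) \<longlonglongrightarrow> suminf dd" using sd' summable_LIMSEQ by blast
    then have "(\<lambda>n. g n - f x + f x) \<longlonglongrightarrow> suminf dd + f x" unfolding tel
      by (intro tendsto_add) auto
    then have "g \<longlonglongrightarrow> f x + suminf dd" by (simp add: add.commute)
    then have lg: "lim g = f x + suminf dd" by (rule limI)
    have "\<bar>suminf dd\<bar> \<le> (\<Sum>k. \<bar>dd k\<bar>)" by (rule summable_rabs[OF sd])
    also have "\<dots> \<le> (\<Sum>k. s ^ k * K)" by (rule suminf_le[OF ddb sd sg])
    also have "\<dots> = K / (1 - s)"
      using s0 s1 by (simp add: suminf_mult2[symmetric] suminf_geometric)
    finally have "\<bar>suminf dd\<bar> \<le> K / (1 - s)" .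
    moreover have "\<bar>f x\<bar> \<le> B" using B fS x by blast
    ultimately show "\<bar>ns_fractal xs N alpha L f x\<bar> \<le> B + K / (1 - s)"
      unfolding nf lg by linarith
  qed
qed

end
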